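(* Let $T$ be an aperiodic $1$-bounded streaming $\omega$-string transducer with variable set $\mathcal X$. For all variables $X,Y\in\mathcal X$ there exists a first-order formula $\phi_{X\rightsquigarrow Y}(x,y)$ with two free variables such that for all strings $s\in\mathrm{dom}(T)$ and any two positions $i\le j$ of $s$, $s\models\phi_{X\rightsquigarrow Y}(i,j)$ iff $(q_i,X)\rightsquigarrow_1^{s[i+1:j]}(q_j,Y)$, where $q_0q_1\cdots$ is the accepting run of $T$ on $s$.
   Context: Streaming $\omega$-string transducer (SST): $T=(\Sigma,\Gamma,Q,q_0,\delta,\mathcal X,\rho,F)$ with $\delta:Q\times\Sigma\to Q$, finite variables $\mathcal X$, copyless updates $\rho:Q\times\Sigma\to[\mathcal X\to(\Gamma\cup\mathcal X)^*]$, partial output function $F:2^Q\rightharpoonup\mathcal X^*$. Run on $s=a_1a_2\cdots$: $q_0q_1\cdots$, $q_i=\delta(q_{i-1},a_i)$ ($q_i$ is the state after reading the first $i$ letters); it is accepting and $s\in\mathrm{dom}(T)$ iff the set of states visited infinitely often is in $\mathrm{dom}(F)$. $s[i+1:j]$ denotes the factor $a_{i+1}\cdots a_j$ (empty if $i=j$). For $u\in\Sigma^*$, states $p,q$ and variables $X,Y$: with $\sigma$ the composition of the updates along the run from $p$ on $u$ (starting from the identity substitution), $(p,X)\rightsquigarrow^u_k(q,Y)$ means that this run ends in $q$ and $X$ occurs exactly $k$ times in $\sigma(Y)$. Transition matrices: with $\mathrm{dom}(F)=\{F_1,\dots,F_n\}$, $M_u[(p,X)][(q,Y)]=\bot$ if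 the run from $p$ on $u$ does not end in $q$, else $(k,(x_1,\dots,x_n))$ where $(p,X)\rightsquigarrow^u_k(q,Y)$ and, with $S$ the set of visited states, $x_i=0$ if $S\not\subseteq F_i$, $1$ if $S=F_i$, $S$ if $S\subsetneq F_i$. $T$ is aperiodic if some $m\ge1$ gives $M_{u^m}=M_{u^{m+1}}$ for all $u$, and $1$-bounded if all non-$\bot$ entries $(k,\dots)$ satisfy $k\le1$. First-order formulas are over $\omega$-strings with positions $\{1,2,\dots\}$, natural order and unary letter predicates. *)

theory Defs
  imports Main
begin

text \<open>Sigma = 'a (finite), Gamma = 'g, Q = 'q (finite), variables = 'x (finite).
  Updates map each variable to a word over Gamma + variables (Inl = output letter,
  Inr = variable).  The output function F is partial: outF T S = None means S is not
  in dom(F).\<close>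

record ('a, 'g, 'q, 'x) sst =
  init  :: 'q
  delta :: "'q \<Rightarrow> 'a \<Rightarrow> 'q"
  upd   :: "'q \<Rightarrow> 'a \<Rightarrow> 'x \<Rightarrow> ('g + 'x) list"
  outF  :: "'q set \<Rightarrow> 'x list option"

definition copyless :: "('a, 'g, 'q, 'x::finite) sst \<Rightarrow> bool" where
  "copyless T \<longleftrightarrow> (\<forall>q a X. (\<Sum>Y\<in>UNIV. count_list (upd T q a Y) (Inr X)) \<le> 1)"

definition subst :: "('x \<Rightarrow> ('g + 'x) list) \<Rightarrow> ('g + 'x) list \<Rightarrow> ('g + 'x) list" where
  "subst \<sigma> w = concat (map (\<lambda>c. case c of Inl g \<Rightarrow> [Inl g] | Inr X \<Rightarrow> \<sigma> X) w)"

definition step :: "('a, 'g, 'q, 'x) sst \<Rightarrow> 'q \<times> ('x \<Rightarrow> ('g + 'x) list) \<Rightarrow> 'a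
                     \<Rightarrow> 'q \<times> ('x \<Rightarrow> ('g + 'x) list)" where
  "step T qs a = (delta T (fst qs) a, (\<lambda>Y. subst (snd qs) (upd T (fst qs) a Y)))"

definition run_from :: "('a, 'g, 'q, 'x) sst \<Rightarrow> 'q \<Rightarrow> 'a list \<Rightarrow> 'q \<times> ('x \<Rightarrow> ('g + 'x) list)" where
  "run_from T p u = foldl (step T) (p, (\<lambda>X. [Inr X])) u"

definition state_after :: "('a, 'g, 'q, 'x) sst \<Rightarrow> 'q \<Rightarrow> 'a list \<Rightarrow> 'q" where
  "state_after T p u = foldl (delta T) p u"

definition flows :: "('a, 'g, 'q, 'x) sst \<Rightarrow> 'q \<Rightarrow> 'x \<Rightarrow> 'a list \<Rightarrow> nat \<Rightarrow> 'q \<Rightarrow> 'x \<Rightarrow> bool" where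
  "flows T p X u k q Y \<longleftrightarrow>
     fst (run_from T p u) = q \<and> count_list (snd (run_from T p u) Y) (Inr X) = k"

definition visited :: "('a, 'g, 'q, 'x) sst \<Rightarrow> 'q \<Rightarrow> 'a list \<Rightarrow> 'q set" where
  "visited T p u = {state_after T p (take i u) | i. i \<le> length u}"

datatype 'q flag = Zero | One | Sub "'q set"

text \<open>Transition matrix entries.  The tuple (x_1,...,x_n) indexed by dom(F) = {F_1,...,F_n}
  is represented as a function on dom(F) (value Zero outside dom(F)).\<close>
definition tmat :: "('a, 'g, 'q, 'x) sst \<Rightarrow> 'a list \<Rightarrow> 'q \<times> 'x \<Rightarrow> 'q \<times> 'x
                      \<Rightarrow> (nat \<times> ('q set \<Rightarrow> 'q flag)) option" where
  "tmat T u pX qY =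
    (let p = fst pX; X = snd pX; q = fst qY; Y = snd qY; S = visited T p u in
     if state_after T p u \<noteq> q then None
     else Some (count_list (snd (run_from T p u) Y) (Inr X),
                (\<lambda>Fi. if Fi \<in> dom (outF T) then
                        (if \<not> S \<subseteq> Fi then Zero else if S = Fi then One else Sub S)
                      else Zero)))"

definition wpow :: "'a list \<Rightarrow> nat \<Rightarrow> 'a list" where
  "wpow u m = concat (replicate m u)"

definition aperiodic :: "('a, 'g, 'q, 'x) sst \<Rightarrow> bool" where
  "aperiodic T \<longleftrightarrow> (\<exists>m\<ge>1. \<forall>u. tmat T (wpow u m) = tmat T (wpow u (Suc m)))"

definition one_bounded :: "('a, 'g, 'q, 'x) sst \<Rightarrow> bool" where
  "one_bounded T \<longleftrightarrow> (\<forall>u pX qY k f. tmat T u pX qY = Some (k, f) \<longrightarrow> k \<le> 1)"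

text \<open>An omega-string a_1 a_2 ... is represented as s :: nat => 'a with a_i = s (i - 1).\<close>

definition pref :: "(nat \<Rightarrow> 'a) \<Rightarrow> nat \<Rightarrow> 'a list" where
  "pref s i = map s [0..<i]"

text \<open>factor s i j = s[i+1:j] = a_{i+1} ... a_j\<close>
definition factor :: "(nat \<Rightarrow> 'a) \<Rightarrow> nat \<Rightarrow> nat \<Rightarrow> 'a list" where
  "factor s i j = map s [i..<j]"

text \<open>q_i: state after reading the first i letters.\<close>
definition runq :: "('a, 'g, 'q, 'x) sst \<Rightarrow> (nat \<Rightarrow> 'a) \<Rightarrow> nat \<Rightarrow> 'q" where
  "runq T s i = state_after T (init T) (pref s i)"

definition inf_states :: "('a, 'g, 'q, 'x) sst \<Rightarrow> (nat \<Rightarrow> 'a) \<Rightarrow> 'q set" where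
  "inf_states T s = {q. \<exists>\<^sub>\<infinity>n. runq T s n = q}"

definition in_dom :: "('a, 'g, 'q, 'x) sst \<Rightarrow> (nat \<Rightarrow> 'a) \<Rightarrow> bool" where
  "in_dom T s \<longleftrightarrow> inf_states T s \<in> dom (outF T)"

text \<open>Variables are natural numbers; positions are 1,2,3,...\<close>
datatype 'a fo =
    FLess nat nat
  | FEq nat nat
  | FLetter 'a nat
  | FNot "'a fo"
  | FAnd "'a fo" "'a fo"
  | FEx nat "'a fo"

fun fv :: "'a fo \<Rightarrow> nat set" where
  "fv (FLess x y) = {x, y}"
| "fv (FEq x y) = {x, y}"
| "fv (FLetter a x) = {x}"
| "fv (FNot \<phi>) = fv \<phi>"
| "fv (FAnd \<phi> \<psi>) = fv \<phi> \<union> fv \<psi>"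
| "fv (FEx x \<phi>) = fv \<phi> - {x}"

text \<open>Satisfaction; the valuation maps variables to positions (intended to be \<ge> 1).\<close>
fun sat :: "(nat \<Rightarrow> 'a) \<Rightarrow> (nat \<Rightarrow> nat) \<Rightarrow> 'a fo \<Rightarrow> bool" where
  "sat s \<nu> (FLess x y) \<longleftrightarrow> \<nu> x < \<nu> y"
| "sat s \<nu> (FEq x y) \<longleftrightarrow> \<nu> x = \<nu> y"
| "sat s \<nu> (FLetter a x) \<longleftrightarrow> s (\<nu> x - 1) = a"
| "sat s \<nu> (FNot \<phi>) \<longleftrightarrow> \<not> sat s \<nu> \<phi>"
| "sat s \<nu> (FAnd \<phi> \<psi>) \<longleftrightarrow> sat s \<nu> \<phi> \<and> sat s \<nu> \<psi>"
| "sat s \<nu> (FEx x \<phi>) \<longleftrightarrow> (\<exists>p\<ge>1. sat s (\<nu>(x := p)) \<phi>)"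

end

theory Submission
  imports Defs
begin


definition good :: "(nat \<Rightarrow> nat) \<Rightarrow> bool" where "good \<nu> \<longleftrightarrow> (\<forall>v. 1 \<le> \<nu> v)"

definition defv :: "nat set \<Rightarrow> ((nat \<Rightarrow> 'a) \<Rightarrow> (nat \<Rightarrow> nat) \<Rightarrow> bool) \<Rightarrow> bool" where
  "defv V \<Phi> \<longleftrightarrow> (\<exists>\<phi>::'a fo. fv \<phi> \<subseteq> V \<and> (\<forall>s \<nu>. good \<nu> \<longrightarrow> (sat s \<nu> \<phi> \<longleftrightarrow> \<Phi> s \<nu>)))"

definition def1 :: "((nat \<Rightarrow> 'a) \<Rightarrow> nat \<Rightarrow> bool) \<Rightarrow> bool" where
  "def1 D \<longleftrightarrow> (\<forall>x. defv {x} (\<lambda>s \<nu>. D s (\<nu> x)))"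

definition def2 :: "((nat \<Rightarrow> 'a) \<Rightarrow> nat \<Rightarrow> nat \<Rightarrow> bool) \<Rightarrow> bool" where
  "def2 D \<longleftrightarrow> (\<forall>x y. defv {x,y} (\<lambda>s \<nu>. D s (\<nu> x) (\<nu> y)))"

lemma defv_mono: "defv V \<Phi> \<Longrightarrow> V \<subseteq> W \<Longrightarrow> defv W \<Phi>"
  unfolding defv_def by blast

lemma defv_cong: "defv V \<Phi> \<Longrightarrow> (\<And>s \<nu>. good \<nu> \<Longrightarrow> \<Phi> s \<nu> = \<Psi> s \<nu>) \<Longrightarrow> defv V \<Psi>"
  unfolding defv_def by auto

lemma defv_and: "defv V \<Phi> \<Longrightarrow> defv V \<Psi> \<Longrightarrow> defv V (\<lambda>s \<nu>. \<Phi> s \<nu> \<and> \<Psi> s \<nu>)"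
proof -
  assume "defv V \<Phi>" "defv V \<Psi>"
  then obtain \<phi> \<psi> where "fv \<phi> \<subseteq> V" "\<forall>s \<nu>. good \<nu> \<longrightarrow> (sat s \<nu> \<phi> \<longleftrightarrow> \<Phi> s \<nu>)"
     "fv \<psi> \<subseteq> V" "\<forall>s \<nu>. good \<nu> \<longrightarrow> (sat s \<nu> \<psi> \<longleftrightarrow> \<Psi> s \<nu>)" unfolding defv_def by blast
  then show ?thesis unfolding defv_def by (intro exI[of _ "FAnd \<phi> \<psi>"]) auto
qed

lemma defv_not: "defv V \<Phi> \<Longrightarrow> defv V (\<lambda>s \<nu>. \<not> \<Phi> s \<nu>)"
proof -
  assume "defv V \<Phi>"
  then obtain \<phi> where "fv \<phi> \<subseteq> V" "\<forall>s \<nu>. good \<nu> \<longrightarrow> (sat s \<nu> \<phi> \<longleftrightarrow> \<Phi> s \<nu>)"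
    unfolding defv_def by blast
  then show ?thesis unfolding defv_def by (intro exI[of _ "FNot \<phi>"]) auto
qed

lemma defv_or: "defv V \<Phi> \<Longrightarrow> defv V \<Psi> \<Longrightarrow> defv V (\<lambda>s \<nu>. \<Phi> s \<nu> \<or> \<Psi> s \<nu>)"
  using defv_not[OF defv_and[OF defv_not defv_not]] by simp

lemma defv_false: "defv V (\<lambda>s \<nu>. False)"
  unfolding defv_def by (intro exI[of _ "FEx 0 (FNot (FEq 0 0))"]) auto

lemma defv_const: "defv V (\<lambda>s \<nu>. b)"
  using defv_false[of V] defv_not[OF defv_false[of V]] by (cases b) auto

lemma defv_ex: "defv (insert z V) \<Phi> \<Longrightarrow> defv V (\<lambda>s \<nu>. \<exists>p\<ge>1. \<Phi> s (\<nu>(z:=p)))"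
proof -
  assume "defv (insert z V) \<Phi>"
  then obtain \<phi> where f: "fv \<phi> \<subseteq> insert z V" and e: "\<forall>s \<nu>. good \<nu> \<longrightarrow> (sat s \<nu> \<phi> \<longleftrightarrow> \<Phi> s \<nu>)"
    unfolding defv_def by blast
  have "good (\<nu>(z:=p))" if "good \<nu>" "1 \<le> p" for \<nu> and p :: nat using that by (auto simp: good_def)
  then show ?thesis unfolding defv_def using f e by (intro exI[of _ "FEx z \<phi>"]) auto
qed

lemma defv_fin: "finite I \<Longrightarrow> (\<And>i. i \<in> I \<Longrightarrow> defv V (\<Phi> i)) \<Longrightarrow> defv V (\<lambda>s \<nu>. \<exists>i\<in>I. \<Phi> i s \<nu>)"
proof (induction I rule: finite_induct)
  case empty then show ?case using defv_false by simp
next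
  case (insert a I)
  have "defv V (\<lambda>s \<nu>. \<Phi> a s \<nu> \<or> (\<exists>i\<in>I. \<Phi> i s \<nu>))"
    using insert by (intro defv_or) auto
  then show ?case by simp
qed

lemma defv_less: "defv {x,y} (\<lambda>s \<nu>. \<nu> x < \<nu> y)"
  unfolding defv_def by (intro exI[of _ "FLess x y"]) auto

lemma defv_letter: "defv {x} (\<lambda>s \<nu>. s (\<nu> x - 1) = a)"
  unfolding defv_def by (intro exI[of _ "FLetter a x"]) auto

lemma def2_cong: "def2 D \<Longrightarrow> (\<And>s x y. 1 \<le> x \<Longrightarrow> 1 \<le> y \<Longrightarrow> D s x y = D' s x y) \<Longrightarrow> def2 D'"
  unfolding def2_def
proof (intro allI)
  fix x y assume a: "\<forall>x y. defv {x, y} (\<lambda>s \<nu>. D s (\<nu> x) (\<nu> y))" and b: "\<And>s x y. 1 \<le> x \<Longrightarrow> 1 \<le> y \<Longrightarrow> D s x y = D' s x y"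
  show "defv {x, y} (\<lambda>s \<nu>. D' s (\<nu> x) (\<nu> y))"
    by (rule defv_cong[OF a[rule_format, of x y]]) (simp add: b good_def)
qed

lemma def1_cong: "def1 D \<Longrightarrow> (\<And>s x. 1 \<le> x \<Longrightarrow> D s x = D' s x) \<Longrightarrow> def1 D'"
  unfolding def1_def
proof (intro allI)
  fix x assume a: "\<forall>x. defv {x} (\<lambda>s \<nu>. D s (\<nu> x))" and b: "\<And>s x. 1 \<le> x \<Longrightarrow> D s x = D' s x"
  show "defv {x} (\<lambda>s \<nu>. D' s (\<nu> x))"
    by (rule defv_cong[OF a[rule_format, of x]]) (simp add: b good_def)
qed

lemma def2_and: "def2 D \<Longrightarrow> def2 E \<Longrightarrow> def2 (\<lambda>s x y. D s x y \<and> E s x y)"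
  unfolding def2_def by (auto intro: defv_and)

lemma def2_or: "def2 D \<Longrightarrow> def2 E \<Longrightarrow> def2 (\<lambda>s x y. D s x y \<or> E s x y)"
  unfolding def2_def by (auto intro: defv_or)

lemma def2_not: "def2 D \<Longrightarrow> def2 (\<lambda>s x y. \<not> D s x y)"
  unfolding def2_def by (auto intro: defv_not)

lemma def2_const: "def2 (\<lambda>s x y. b)"
  unfolding def2_def by (auto intro: defv_const)

lemma def2_fin: "finite I \<Longrightarrow> (\<And>i. i \<in> I \<Longrightarrow> def2 (D i)) \<Longrightarrow> def2 (\<lambda>s x y. \<exists>i\<in>I. D i s x y)"
  unfolding def2_def by (auto intro: defv_fin)

lemma def2_less: "def2 (\<lambda>s x y. x < y)"
  unfolding def2_def by (auto intro: defv_less)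

lemma def2_le: "def2 (\<lambda>s x y. x \<le> y)"
  unfolding def2_def
proof (intro allI)
  fix x y :: nat
  have "defv {y,x} (\<lambda>s \<nu>. \<not> \<nu> y < \<nu> x)" by (rule defv_not[OF defv_less])
  then show "defv {x,y} (\<lambda>s \<nu>. \<nu> x \<le> \<nu> y)" by (simp add: insert_commute not_less)
qed

lemma def2_L: "def1 D \<Longrightarrow> def2 (\<lambda>s x y. D s x)"
  unfolding def2_def def1_def by (auto intro: defv_mono)

lemma def2_R: "def1 D \<Longrightarrow> def2 (\<lambda>s x y. D s y)"
  unfolding def2_def def1_def by (auto intro: defv_mono)

lemma def1_diag: "def2 D \<Longrightarrow> def1 (\<lambda>s x. D s x x)"
  unfolding def2_def def1_def
proof (intro allI)
  fix x assume "\<forall>x y. defv {x, y} (\<lambda>s \<nu>. D s (\<nu> x) (\<nu> y))"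
  then have "defv {x, x} (\<lambda>s \<nu>. D s (\<nu> x) (\<nu> x))" by blast
  then show "defv {x} (\<lambda>s \<nu>. D s (\<nu> x) (\<nu> x))" by simp
qed

lemma def1_and: "def1 D \<Longrightarrow> def1 E \<Longrightarrow> def1 (\<lambda>s x. D s x \<and> E s x)"
  unfolding def1_def by (auto intro: defv_and)

lemma def1_letter: "def1 (\<lambda>s p. s (p - 1) = a)"
  unfolding def1_def using defv_letter by fastforce

lemma def1_fin: "finite I \<Longrightarrow> (\<And>i. i \<in> I \<Longrightarrow> def1 (D i)) \<Longrightarrow> def1 (\<lambda>s x. \<exists>i\<in>I. D i s x)"
  unfolding def1_def by (auto intro: defv_fin)

lemma def1_const: "def1 (\<lambda>s x. b)"
  unfolding def1_def by (auto intro: defv_const)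

lemma def2_comp: "def2 D \<Longrightarrow> def2 E \<Longrightarrow> def2 (\<lambda>s x y. \<exists>z\<ge>1. D s x z \<and> E s z y)"
  unfolding def2_def
proof (intro allI)
  fix x y :: nat
  assume d: "\<forall>x y. defv {x, y} (\<lambda>s \<nu>. D s (\<nu> x) (\<nu> y))" and e: "\<forall>x y. defv {x, y} (\<lambda>s \<nu>. E s (\<nu> x) (\<nu> y))"
  define z where "z = x + y + 1"
  have zx: "z \<noteq> x" "z \<noteq> y" unfolding z_def by linarith+
  have "defv (insert z {x,y}) (\<lambda>s \<nu>. D s (\<nu> x) (\<nu> z) \<and> E s (\<nu> z) (\<nu> y))"
  proof (rule defv_and)
    show "defv (insert z {x, y}) (\<lambda>s \<nu>. D s (\<nu> x) (\<nu> z))"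
      by (rule defv_mono[OF d[rule_format, of x z]]) auto
    show "defv (insert z {x, y}) (\<lambda>s \<nu>. E s (\<nu> z) (\<nu> y))"
      by (rule defv_mono[OF e[rule_format, of z y]]) auto
  qed
  from defv_ex[OF this] show "defv {x, y} (\<lambda>s \<nu>. \<exists>z\<ge>1. D s (\<nu> x) z \<and> E s z (\<nu> y))"
    using zx by simp
qed

lemma def1_ex: "def2 E \<Longrightarrow> def1 (\<lambda>s p. \<exists>q\<ge>1. E s q p)"
  unfolding def2_def def1_def
proof (intro allI)
  fix x :: nat
  assume e: "\<forall>x y. defv {x, y} (\<lambda>s \<nu>. E s (\<nu> x) (\<nu> y))"
  define z where "z = x + 1"
  have zx: "z \<noteq> x" unfolding z_def by linarith+
  have "defv (insert z {x}) (\<lambda>s \<nu>. E s (\<nu> z) (\<nu> x))" using e by auto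
  from defv_ex[OF this] show "defv {x} (\<lambda>s \<nu>. \<exists>q\<ge>1. E s q (\<nu> x))"
    using zx by simp
qed




definition mon :: "'m set \<Rightarrow> ('m \<Rightarrow> 'm \<Rightarrow> 'm) \<Rightarrow> 'm \<Rightarrow> bool" where
  "mon M mul e \<longleftrightarrow> e \<in> M \<and> (\<forall>x\<in>M. \<forall>y\<in>M. mul x y \<in> M) \<and>
     (\<forall>x\<in>M. \<forall>y\<in>M. \<forall>z\<in>M. mul (mul x y) z = mul x (mul y z)) \<and> (\<forall>x\<in>M. mul e x = x \<and> mul x e = x)"

fun mpow :: "('m \<Rightarrow> 'm \<Rightarrow> 'm) \<Rightarrow> 'm \<Rightarrow> 'm \<Rightarrow> nat \<Rightarrow> 'm" where
  "mpow mul e x 0 = e"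
| "mpow mul e x (Suc n) = mul x (mpow mul e x n)"

definition aper :: "'m set \<Rightarrow> ('m \<Rightarrow> 'm \<Rightarrow> 'm) \<Rightarrow> 'm \<Rightarrow> bool" where
  "aper M mul e \<longleftrightarrow> (\<forall>x\<in>M. \<exists>n. mpow mul e x n = mpow mul e x (Suc n))"

fun hv :: "('m \<Rightarrow> 'm \<Rightarrow> 'm) \<Rightarrow> 'm \<Rightarrow> (nat \<Rightarrow> bool) \<Rightarrow> (nat \<Rightarrow> 'm) \<Rightarrow> nat \<Rightarrow> nat \<Rightarrow> 'm" where
  "hv mul e P lab x 0 = e"
| "hv mul e P lab x (Suc y) = (if Suc y \<le> x then e else if P (Suc y) then mul (hv mul e P lab x y) (lab (Suc y)) else hv mul e P lab x y)"

definition allin :: "'m set \<Rightarrow> (nat \<Rightarrow> bool) \<Rightarrow> (nat \<Rightarrow> 'm) \<Rightarrow> nat \<Rightarrow> nat \<Rightarrow> bool" where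
  "allin A P lab x y \<longleftrightarrow> (\<forall>p. x < p \<and> p \<le> y \<and> P p \<longrightarrow> lab p \<in> A)"

lemma mon_e: "mon M mul e \<Longrightarrow> e \<in> M" unfolding mon_def by blast
lemma mon_cl: "mon M mul e \<Longrightarrow> x \<in> M \<Longrightarrow> y \<in> M \<Longrightarrow> mul x y \<in> M" unfolding mon_def by blast
lemma mon_assoc: "mon M mul e \<Longrightarrow> x \<in> M \<Longrightarrow> y \<in> M \<Longrightarrow> z \<in> M \<Longrightarrow> mul (mul x y) z = mul x (mul y z)"
  unfolding mon_def by blast
lemma mon_l: "mon M mul e \<Longrightarrow> x \<in> M \<Longrightarrow> mul e x = x" unfolding mon_def by blast
lemma mon_r: "mon M mul e \<Longrightarrow> x \<in> M \<Longrightarrow> mul x e = x" unfolding mon_def by blast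

lemma allin_mono: "allin A P lab x y \<Longrightarrow> A \<subseteq> B \<Longrightarrow> allin B P lab x y"
  unfolding allin_def by blast
lemma allin_sub: "allin A P lab x y \<Longrightarrow> x \<le> x' \<Longrightarrow> y' \<le> y \<Longrightarrow> allin A P lab x' y'"
  unfolding allin_def by auto

lemma hv_le: "y \<le> x \<Longrightarrow> hv mul e P lab x y = e"
  by (induction y) auto

lemma hv_Suc: "x \<le> y \<Longrightarrow> hv mul e P lab x (Suc y) = (if P (Suc y) then mul (hv mul e P lab x y) (lab (Suc y)) else hv mul e P lab x y)"
  by simp

lemma hv_in: "mon M mul e \<Longrightarrow> allin M P lab x y \<Longrightarrow> hv mul e P lab x y \<in> M"
proof (induction y)
  case 0 then show ?case by (simp add: mon_e)
next
  case (Suc y)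
  have "allin M P lab x y" using Suc.prems allin_sub by fastforce
  then have h: "hv mul e P lab x y \<in> M" using Suc by blast
  show ?case
  proof (cases "Suc y \<le> x")
    case True then show ?thesis by (simp add: mon_e[OF Suc.prems(1)])
  next
    case False
    then have "P (Suc y) \<Longrightarrow> lab (Suc y) \<in> M" using Suc.prems(2) unfolding allin_def by auto
    then show ?thesis using False h mon_cl[OF Suc.prems(1)] by auto
  qed
qed

lemma hv_noP: "(\<And>p. x < p \<Longrightarrow> p \<le> y \<Longrightarrow> \<not> P p) \<Longrightarrow> hv mul e P lab x y = e"
  by (induction y) auto

lemma hv_split: "mon M mul e \<Longrightarrow> allin M P lab x y \<Longrightarrow> x \<le> z \<Longrightarrow> z \<le> y \<Longrightarrow>
   hv mul e P lab x y = mul (hv mul e P lab x z) (hv mul e P lab z y)"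
proof (induction y)
  case 0 then show ?case using mon_r[OF 0(1) mon_e[OF 0(1)]] by (simp add: hv_le)
next
  case (Suc y)
  show ?case
  proof (cases "z = Suc y")
    case True
    have "hv mul e P lab (Suc y) (Suc y) = e" by (rule hv_le) simp
    then show ?thesis using True hv_in[OF Suc.prems(1,2)] mon_r[OF Suc.prems(1)] by (simp del: hv.simps)
  next
    case False
    then have zy: "z \<le> y" using Suc.prems by auto
    have ay: "allin M P lab x y" using Suc.prems allin_sub by fastforce
    have IH: "hv mul e P lab x y = mul (hv mul e P lab x z) (hv mul e P lab z y)" using Suc zy ay by blast
    have i1: "hv mul e P lab x z \<in> M" using hv_in[OF Suc.prems(1)] allin_sub[OF ay] zy by auto
    have i2: "hv mul e P lab z y \<in> M" using hv_in[OF Suc.prems(1)] allin_sub[OF ay] Suc.prems by auto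
    have l: "P (Suc y) \<Longrightarrow> lab (Suc y) \<in> M" using Suc.prems zy unfolding allin_def by auto
    show ?thesis using zy Suc.prems(3) IH i1 i2 l mon_assoc[OF Suc.prems(1)] by (auto simp: hv_Suc)
  qed
qed

lemma hv_e: "mon M mul e \<Longrightarrow> allin {e} P lab x y \<Longrightarrow> hv mul e P lab x y = e"
proof (induction y)
  case 0 then show ?case by simp
next
  case (Suc y)
  have "allin {e} P lab x y" using Suc.prems allin_sub by fastforce
  then have "hv mul e P lab x y = e" using Suc by blast
  moreover have "x < Suc y \<Longrightarrow> P (Suc y) \<Longrightarrow> lab (Suc y) = e" using Suc.prems unfolding allin_def by auto
  ultimately show ?case using mon_l[OF Suc.prems(1) mon_e[OF Suc.prems(1)]] by auto
qed

lemma mpow_in: "mon M mul e \<Longrightarrow> x \<in> M \<Longrightarrow> mpow mul e x n \<in> M"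
  by (induction n) (auto simp: mon_e mon_cl)

lemma mpow_Suc_right: "mon M mul e \<Longrightarrow> x \<in> M \<Longrightarrow> mpow mul e x (Suc n) = mul (mpow mul e x n) x"
proof (induction n)
  case 0 then show ?case by (simp add: mon_l mon_r)
next
  case (Suc n)
  have "mul x (mul (mpow mul e x n) x) = mul (mul x (mpow mul e x n)) x"
    using mpow_in[OF Suc.prems] Suc.prems by (simp add: mon_assoc)
  then show ?case using Suc by simp
qed

section \<open>Local divisor\<close>

definition Mc :: "'m set \<Rightarrow> ('m \<Rightarrow> 'm \<Rightarrow> 'm) \<Rightarrow> 'm \<Rightarrow> 'm set" where
  "Mc M mul c = {u. (\<exists>y\<in>M. u = mul c y) \<and> (\<exists>z\<in>M. u = mul z c)}"

definition zc :: "'m set \<Rightarrow> ('m \<Rightarrow> 'm \<Rightarrow> 'm) \<Rightarrow> 'm \<Rightarrow> 'm \<Rightarrow> 'm" where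
  "zc M mul c u = (SOME z. z \<in> M \<and> u = mul z c)"

definition mulc :: "'m set \<Rightarrow> ('m \<Rightarrow> 'm \<Rightarrow> 'm) \<Rightarrow> 'm \<Rightarrow> 'm \<Rightarrow> 'm \<Rightarrow> 'm" where
  "mulc M mul c u v = mul (zc M mul c u) v"

lemma zc_prop: "u \<in> Mc M mul c \<Longrightarrow> zc M mul c u \<in> M \<and> u = mul (zc M mul c u) c"
  unfolding zc_def Mc_def by (rule someI_ex) blast

lemma Mc_sub: assumes m: "mon M mul e" and c: "c \<in> M" shows "Mc M mul c \<subseteq> M"
proof
  fix u assume "u \<in> Mc M mul c"
  then obtain y where "y \<in> M" "u = mul c y" unfolding Mc_def by blast
  then show "u \<in> M" using mon_cl[OF m c] by simp
qed

lemma c_in_Mc: assumes m: "mon M mul e" and c: "c \<in> M" shows "c \<in> Mc M mul c"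
proof -
  have "c = mul c e" "c = mul e c" using mon_l[OF m c] mon_r[OF m c] by auto
  then show ?thesis unfolding Mc_def using mon_e[OF m] c by blast
qed

lemma mulc_in: assumes m: "mon M mul e" and c: "c \<in> M" and u: "u \<in> Mc M mul c" and v: "v \<in> Mc M mul c"
  shows "mulc M mul c u v \<in> Mc M mul c"
proof -
  obtain yu where yu: "yu \<in> M" "u = mul c yu" using u unfolding Mc_def by blast
  obtain yv where yv: "yv \<in> M" "v = mul c yv" using v unfolding Mc_def by blast
  obtain zv where zv: "zv \<in> M" "v = mul zv c" using v unfolding Mc_def by blast
  define zu where "zu = zc M mul c u"
  have z: "zu \<in> M" "u = mul zu c" using zc_prop[OF u] zu_def by auto
  have "mul zu v = mul (mul zu c) yv" using yv z(1) c by (simp add: mon_assoc[OF m])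
  also have "\<dots> = mul u yv" using z(2) by simp
  also have "\<dots> = mul c (mul yu yv)" using yu yv c by (simp add: mon_assoc[OF m])
  finally have 1: "mul zu v = mul c (mul yu yv)" .
  have 2: "mul zu v = mul (mul zu zv) c"
    using zv z(1) c by (simp add: mon_assoc[OF m])
  have h: "mul yu yv \<in> M" "mul zu zv \<in> M" using yu yv z zv mon_cl[OF m] by auto
  show ?thesis unfolding mulc_def zu_def[symmetric] Mc_def using 1 2 h by blast
qed

lemma mon_Mc: assumes m: "mon M mul e" and c: "c \<in> M"
  shows "mon (Mc M mul c) (mulc M mul c) c"
proof -
  have sub: "Mc M mul c \<subseteq> M" by (rule Mc_sub[OF m c])
  have assoc: "mulc M mul c (mulc M mul c u v) w = mulc M mul c u (mulc M mul c v w)"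
    if u: "u \<in> Mc M mul c" and v: "v \<in> Mc M mul c" and w: "w \<in> Mc M mul c" for u v w
  proof -
    define a where "a = mulc M mul c u v"
    have a: "a \<in> Mc M mul c" unfolding a_def by (rule mulc_in[OF m c u v])
    obtain yw where yw: "yw \<in> M" "w = mul c yw" using w unfolding Mc_def by blast
    define za zu zv where "za = zc M mul c a" and "zu = zc M mul c u" and "zv = zc M mul c v"
    have za: "za \<in> M" "a = mul za c" using zc_prop[OF a] za_def by auto
    have zu: "zu \<in> M" "u = mul zu c" using zc_prop[OF u] zu_def by auto
    have zv: "zv \<in> M" "v = mul zv c" using zc_prop[OF v] zv_def by auto
    have vM: "v \<in> M" using v sub by blast
    have "mulc M mul c a w = mul (mul za c) yw" unfolding mulc_def za_def[symmetric] using za(1) yw c by (simp add: mon_assoc[OF m])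
    also have "\<dots> = mul a yw" using za(2) by simp
    also have "\<dots> = mul zu (mul v yw)" unfolding a_def mulc_def zu_def[symmetric] using zu(1) vM yw by (simp add: mon_assoc[OF m])
    also have "\<dots> = mul zu (mul (mul zv c) yw)" using zv(2) by simp
    also have "\<dots> = mulc M mul c u (mulc M mul c v w)" unfolding mulc_def zu_def[symmetric] zv_def[symmetric] using zv(1) yw c by (simp add: mon_assoc[OF m])
    finally show ?thesis unfolding a_def .
  qed
  have lu: "mulc M mul c c v = v" if v: "v \<in> Mc M mul c" for v
  proof -
    obtain yv where yv: "yv \<in> M" "v = mul c yv" using v unfolding Mc_def by blast
    have cc: "c \<in> Mc M mul c" by (rule c_in_Mc[OF m c])
    define z where "z = zc M mul c c"
    have z: "z \<in> M" "c = mul z c" using zc_prop[OF cc] z_def by auto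
    have "mul z v = mul (mul z c) yv" using z(1) yv c by (simp add: mon_assoc[OF m])
    also have "\<dots> = v" using z(2)[symmetric] yv(2) by simp
    finally show ?thesis unfolding mulc_def z_def[symmetric] .
  qed
  have ru: "mulc M mul c u c = u" if u: "u \<in> Mc M mul c" for u
    unfolding mulc_def using zc_prop[OF u] by auto
  show ?thesis unfolding mon_def
  proof (intro conjI ballI)
    show "c \<in> Mc M mul c" by (rule c_in_Mc[OF m c])
  qed (auto simp: mulc_in[OF m c] assoc lu ru)
qed

lemma mpow_Mc: assumes m: "mon M mul e" and c: "c \<in> M" and u: "u \<in> Mc M mul c"
  shows "mpow (mulc M mul c) c u n = mul (mpow mul e (zc M mul c u) n) c"
proof (induction n)
  case 0 then show ?case using m c mon_l by fastforce
next
  case (Suc n)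
  define z where "z = zc M mul c u"
  have z: "z \<in> M" using zc_prop[OF u] z_def by auto
  have "mpow (mulc M mul c) c u (Suc n) = mulc M mul c u (mpow (mulc M mul c) c u n)" by simp
  also have "\<dots> = mulc M mul c u (mul (mpow mul e z n) c)" using Suc.IH z_def by simp
  also have "\<dots> = mul z (mul (mpow mul e z n) c)" unfolding mulc_def z_def ..
  finally have "mpow (mulc M mul c) c u (Suc n) = mul z (mul (mpow mul e z n) c)" .
  also have "\<dots> = mul (mpow mul e z (Suc n)) c" using z mpow_in[OF m z, of n] c by (simp add: mon_assoc[OF m])
  finally show ?case unfolding z_def .
qed

lemma aper_Mc: assumes m: "mon M mul e" and c: "c \<in> M" and a: "aper M mul e"
  shows "aper (Mc M mul c) (mulc M mul c) c"
  unfolding aper_def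
proof
  fix u assume u: "u \<in> Mc M mul c"
  have z: "zc M mul c u \<in> M" using zc_prop[OF u] by auto
  then obtain n where n: "mpow mul e (zc M mul c u) n = mpow mul e (zc M mul c u) (Suc n)" using a unfolding aper_def by blast
  have "mpow (mulc M mul c) c u n = mpow (mulc M mul c) c u (Suc n)"
    unfolding mpow_Mc[OF m c u, of n] mpow_Mc[OF m c u, of "Suc n"] using n by simp
  then show "\<exists>n. mpow (mulc M mul c) c u n = mpow (mulc M mul c) c u (Suc n)" by blast
qed

lemma e_notin_Mc: assumes m: "mon M mul e" and c: "c \<in> M" and a: "aper M mul e" and ce: "c \<noteq> e"
  shows "e \<notin> Mc M mul c"
proof
  assume "e \<in> Mc M mul c"
  then obtain y where y: "y \<in> M" "e = mul c y" unfolding Mc_def by blast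
  have key: "mul (mpow mul e c n) (mpow mul e y n) = e" for n
  proof (induction n)
    case 0 then show ?case using m by (simp add: mon_e mon_l)
  next
    case (Suc n)
    have "mul (mpow mul e c (Suc n)) (mpow mul e y (Suc n)) = mul (mul (mpow mul e c n) c) (mul y (mpow mul e y n))"
      using mpow_Suc_right[OF m c] by simp
    also have "\<dots> = mul (mpow mul e c n) (mul (mul c y) (mpow mul e y n))"
      using mpow_in[OF m c] mpow_in[OF m y(1)] c y(1) m by (simp add: mon_assoc mon_cl)
    also have "\<dots> = mul (mpow mul e c n) (mpow mul e y n)" using y(2)[symmetric] mpow_in[OF m y(1)] m by (simp add: mon_l)
    also have "\<dots> = e" using Suc .
    finally show ?case .
  qed
  obtain n where n: "mpow mul e c n = mpow mul e c (Suc n)" using a c unfolding aper_def by blast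
  have "c = mul c (mul (mpow mul e c n) (mpow mul e y n))" using key m c by (simp add: mon_r)
  also have "\<dots> = mul (mpow mul e c (Suc n)) (mpow mul e y n)"
    using mpow_in[OF m c] mpow_in[OF m y(1)] c m by (simp add: mon_assoc)
  also have "\<dots> = e" using n key by simp
  finally show False using ce by simp
qed




definition prevC :: "'m \<Rightarrow> (nat \<Rightarrow> bool) \<Rightarrow> (nat \<Rightarrow> 'm) \<Rightarrow> nat \<Rightarrow> nat \<Rightarrow> bool" where
  "prevC c P lab q p \<longleftrightarrow> 1 \<le> q \<and> q < p \<and> P q \<and> lab q = c \<and> \<not> (\<exists>w. q < w \<and> w < p \<and> P w \<and> lab w = c)"

definition labc :: "('m \<Rightarrow> 'm \<Rightarrow> 'm) \<Rightarrow> 'm \<Rightarrow> 'm \<Rightarrow> 'm set \<Rightarrow> (nat \<Rightarrow> bool) \<Rightarrow> (nat \<Rightarrow> 'm) \<Rightarrow> nat \<Rightarrow> 'm" where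
  "labc mul e c B P lab p = (if \<exists>q. prevC c P lab q p then
      (if allin B P lab (THE q. prevC c P lab q p) (p - 1)
       then mul (mul c (hv mul e P lab (THE q. prevC c P lab q p) (p - 1))) c else c) else c)"

lemma prevC_unique: "prevC c P lab q p \<Longrightarrow> prevC c P lab q' p \<Longrightarrow> q = q'"
proof (rule ccontr)
  assume a: "prevC c P lab q p" "prevC c P lab q' p" "q \<noteq> q'"
  show False
  proof (cases "q < q'")
    case True then show False using a unfolding prevC_def by blast
  next
    case False then have "q' < q" using a(3) by simp
    then show False using a unfolding prevC_def by blast
  qed
qed

lemma labc_eq: "prevC c P lab q p \<Longrightarrow> allin B P lab q (p - 1) \<Longrightarrow>
  labc mul e c B P lab p = mul (mul c (hv mul e P lab q (p - 1))) c"
proof -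
  assume a: "prevC c P lab q p" "allin B P lab q (p - 1)"
  have t: "(THE q. prevC c P lab q p) = q"
  proof (rule the_equality)
    show "prevC c P lab q p" by (rule a(1))
    show "\<And>q'. prevC c P lab q' p \<Longrightarrow> q' = q" by (rule prevC_unique[OF _ a(1)])
  qed
  have ex: "\<exists>q. prevC c P lab q p" using a(1) by (rule exI)
  show ?thesis unfolding labc_def t using ex a(2) by (simp only: if_True)
qed

lemma labc_in: assumes m: "mon M mul e" and c: "c \<in> M" and B: "B \<subseteq> M"
  shows "labc mul e c B P lab p \<in> Mc M mul c"
proof -
  have "mul (mul c t) c \<in> Mc M mul c" if t: "t \<in> M" for t
  proof -
    have "mul (mul c t) c = mul c (mul t c)" using t c by (simp add: mon_assoc[OF m])
    moreover have "mul t c \<in> M" "mul c t \<in> M" using t c mon_cl[OF m] by auto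
    ultimately show ?thesis unfolding Mc_def by blast
  qed
  moreover have "hv mul e P lab q (p - 1) \<in> M" if "allin B P lab q (p - 1)" for q
    using hv_in[OF m allin_mono[OF that B]] .
  ultimately show ?thesis unfolding labc_def using c_in_Mc[OF m c]
    by (simp only: split: if_split) blast
qed

lemma hvc_key:
  assumes m: "mon M mul e" and c: "c \<in> M" and A: "A \<subseteq> M" and B: "B = A - {c}"
    and x1: "1 \<le> x'" and cx: "P x'" "lab x' = c"
  shows "x' \<le> y \<Longrightarrow> P y \<Longrightarrow> lab y = c \<Longrightarrow> allin A P lab x' y \<Longrightarrow>
    hv (mulc M mul c) c (\<lambda>p. P p \<and> lab p = c) (labc mul e c B P lab) x' y = mul c (hv mul e P lab x' y)"
proof (induction y rule: less_induct)
  case (less y)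
  define Pc where "Pc = (\<lambda>p. P p \<and> lab p = c)"
  define L where "L = labc mul e c B P lab"
  have mc: "mon (Mc M mul c) (mulc M mul c) c" by (rule mon_Mc[OF m c])
  have BM: "B \<subseteq> M" using A B by auto
  have allc: "allin (Mc M mul c) Pc L a b" for a b
    unfolding allin_def L_def using labc_in[OF m c BM] by auto
  show ?case
  proof (cases "y = x'")
    case True
    then show ?thesis using mon_r[OF m c] by (simp add: hv_le)
  next
    case False
    then have xy: "x' < y" using less.prems by auto
    define S where "S = {q. x' \<le> q \<and> q < y \<and> P q \<and> lab q = c}"
    have fS: "finite S" unfolding S_def by (rule finite_subset[of _ "{..<y}"]) auto
    have x'S: "x' \<in> S" unfolding S_def using xy cx by auto
    define q where "q = Max S"
    have qS: "q \<in> S" unfolding q_def using fS x'S Max_in by blast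
    have qmax: "w \<in> S \<Longrightarrow> w \<le> q" for w unfolding q_def using fS by simp
    have q1: "x' \<le> q" "q < y" "P q" "lab q = c" using qS unfolding S_def by auto
    have prev: "prevC c P lab q y" unfolding prevC_def
    proof (intro conjI)
      show "1 \<le> q" using q1 x1 by simp
      show "\<not> (\<exists>w>q. w < y \<and> P w \<and> lab w = c)"
      proof
        assume "\<exists>w>q. w < y \<and> P w \<and> lab w = c"
        then obtain w where "w > q" "w \<in> S" using q1 unfolding S_def by auto
        then show False using qmax by fastforce
      qed
    qed (use q1 in auto)
    have allB: "allin B P lab q (y - 1)" unfolding allin_def
    proof (intro allI impI)
      fix p assume p: "q < p \<and> p \<le> y - 1 \<and> P p"
      then have "lab p \<in> A" using less.prems(4) q1 unfolding allin_def by auto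
      moreover have "lab p \<noteq> c"
      proof
        assume "lab p = c"
        then have "p \<in> S" using p q1 unfolding S_def by auto
        then show False using qmax p by fastforce
      qed
      ultimately show "lab p \<in> B" using B by auto
    qed
    define t where "t = hv mul e P lab q (y - 1)"
    have tM: "t \<in> M" unfolding t_def using hv_in[OF m allin_mono[OF allB BM]] .
    have Ly: "L y = mul (mul c t) c" unfolding L_def t_def by (rule labc_eq[OF prev allB])
    obtain y0 where ysuc: "y = Suc y0" using xy by (cases y) auto
    have y0: "y - 1 = y0" using ysuc by simp
    have qy1: "q \<le> y - 1" using q1 by simp
    have hvc1: "hv (mulc M mul c) c Pc L q (y - 1) = c"
      by (rule hv_noP) (use prev in \<open>auto simp: Pc_def prevC_def\<close>)
    have "hv (mulc M mul c) c Pc L q y = mulc M mul c (hv (mulc M mul c) c Pc L q (y - 1)) (L y)"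
      using hv_Suc[OF qy1[unfolded y0], of "mulc M mul c" c Pc L] less.prems(2,3) unfolding Pc_def y0 ysuc[symmetric] by simp
    also have "\<dots> = L y" using hvc1 mon_l[OF mc] labc_in[OF m c BM] unfolding L_def by simp
    finally have hvcqy: "hv (mulc M mul c) c Pc L q y = L y" .
    have IH: "hv (mulc M mul c) c Pc L x' q = mul c (hv mul e P lab x' q)"
      unfolding Pc_def L_def using less.IH[OF q1(2) q1(1) q1(3) q1(4)] allin_sub[OF less.prems(4), of x' q] q1 by simp
    define u where "u = hv (mulc M mul c) c Pc L x' q"
    have uM: "u \<in> Mc M mul c" unfolding u_def using hv_in[OF mc allc] .
    define z where "z = zc M mul c u"
    have z: "z \<in> M" "u = mul z c" using zc_prop[OF uM] z_def by auto
    have AM: "allin M P lab x' y" using allin_mono[OF less.prems(4) A] .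
    have hxq: "hv mul e P lab x' q \<in> M" using hv_in[OF m allin_sub[OF AM, of x' q]] q1 by simp
    have "hv (mulc M mul c) c Pc L x' y = mulc M mul c u (L y)"
      using hv_split[OF mc allc[of x' y] q1(1)] q1 hvcqy unfolding u_def by simp
    also have "\<dots> = mul z (mul (mul c t) c)" unfolding mulc_def z_def[symmetric] Ly ..
    also have "\<dots> = mul (mul z c) (mul t c)" using z tM c mon_cl[OF m tM c] by (simp add: mon_assoc[OF m])
    also have "\<dots> = mul (mul c (hv mul e P lab x' q)) (mul t c)" using z(2)[symmetric] IH unfolding u_def by simp
    also have "\<dots> = mul c (mul (hv mul e P lab x' q) (mul t c))" using hxq tM c mon_cl[OF m tM c] by (simp add: mon_assoc[OF m])
    also have "mul t c = hv mul e P lab q y"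
      using hv_Suc[OF qy1[unfolded y0], of mul e P lab] less.prems(2,3) unfolding t_def y0 ysuc[symmetric] by simp
    also have "mul (hv mul e P lab x' q) (hv mul e P lab q y) = hv mul e P lab x' y"
      using hv_split[OF m AM q1(1)] q1 by simp
    finally show ?thesis unfolding Pc_def L_def .
  qed
qed




lemma def1_not: "def1 D \<Longrightarrow> def1 (\<lambda>s x. \<not> D s x)"
  unfolding def1_def by (auto intro: defv_not)

lemma def1_or: "def1 D \<Longrightarrow> def1 E \<Longrightarrow> def1 (\<lambda>s x. D s x \<or> E s x)"
  unfolding def1_def by (auto intro: defv_or)

lemma def2_allin:
  assumes dP: "def1 P" and dL: "\<forall>u. def1 (\<lambda>s p. lab s p = u)" and fA: "finite A"
  shows "def2 (\<lambda>s x y. allin A (P s) (lab s) x y)"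
proof -
  have d1: "def1 (\<lambda>s z. \<exists>a\<in>A. lab s z = a)" using dL fA by (intro def1_fin) auto
  have "def2 (\<lambda>s x y. \<not> (\<exists>z\<ge>1. x < z \<and> (z \<le> y \<and> (P s z \<and> \<not> (\<exists>a\<in>A. lab s z = a)))))"
    by (intro def2_not def2_comp def2_less def2_and def2_le def2_L def1_and dP def1_not d1)
  then show ?thesis
    by (rule def2_cong) (auto simp: allin_def)
qed

lemma decomp:
  assumes m: "mon M mul e" and c: "c \<in> M" and A: "A \<subseteq> M"
    and xx: "x < x'" "x' \<le> y'" "y' \<le> y" and cx: "P x'" "lab x' = c" and al: "allin A P lab x y"
  shows "hv mul e P lab x y = mul (mul (hv mul e P lab x (x' - 1)) (mul c (hv mul e P lab x' y'))) (hv mul e P lab y' y)"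
proof -
  have AM: "allin M P lab x y" using allin_mono[OF al A] .
  obtain x0 where x0: "x' = Suc x0" using xx by (cases x') auto
  have x0x: "x \<le> x0" using xx x0 by simp
  have h1: "hv mul e P lab x y = mul (hv mul e P lab x x') (hv mul e P lab x' y)"
    using hv_split[OF m AM, of x'] xx by simp
  have h2: "hv mul e P lab x' y = mul (hv mul e P lab x' y') (hv mul e P lab y' y)"
    using hv_split[OF m allin_sub[OF AM, of x' y], of y'] xx by simp
  have h3: "hv mul e P lab x x' = mul (hv mul e P lab x x0) c"
    using hv_Suc[OF x0x, of mul e P lab] cx x0 by simp
  have i1: "hv mul e P lab x x0 \<in> M" using hv_in[OF m allin_sub[OF AM, of x x0]] x0 xx by simp
  have i2: "hv mul e P lab x' y' \<in> M" using hv_in[OF m allin_sub[OF AM, of x' y']] xx by simp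
  have i3: "hv mul e P lab y' y \<in> M" using hv_in[OF m allin_sub[OF AM, of y' y]] xx by simp
  show ?thesis unfolding h1 h2 h3 using x0 i1 i2 i3 c mon_cl[OF m]
    by (simp add: mon_assoc[OF m] mon_cl[OF m])
qed




lemma step_lemma:
  fixes P :: "(nat \<Rightarrow> 'a) \<Rightarrow> nat \<Rightarrow> bool" and lab :: "(nat \<Rightarrow> 'a) \<Rightarrow> nat \<Rightarrow> 'm"
  assumes fin: "finite M" and m: "mon M mul e" and ap: "aper M mul e" and A: "A \<subseteq> M"
    and dP: "def1 P" and dL: "\<forall>u. def1 (\<lambda>s p. lab s p = u)"
    and IHi: "\<And>A' (P' :: (nat \<Rightarrow> 'a) \<Rightarrow> nat \<Rightarrow> bool) (lab' :: (nat \<Rightarrow> 'a) \<Rightarrow> nat \<Rightarrow> 'm) m'.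
        A' \<subset> A \<Longrightarrow> def1 P' \<Longrightarrow> (\<forall>u. def1 (\<lambda>s p. lab' s p = u)) \<Longrightarrow>
        def2 (\<lambda>s x y. allin A' (P' s) (lab' s) x y \<and> hv mul e (P' s) (lab' s) x y = m')"
    and IHo: "\<And>c (P' :: (nat \<Rightarrow> 'a) \<Rightarrow> nat \<Rightarrow> bool) (lab' :: (nat \<Rightarrow> 'a) \<Rightarrow> nat \<Rightarrow> 'm) m'.
        c \<in> A \<Longrightarrow> c \<noteq> e \<Longrightarrow> def1 P' \<Longrightarrow> (\<forall>u. def1 (\<lambda>s p. lab' s p = u)) \<Longrightarrow>
        def2 (\<lambda>s x y. allin (Mc M mul c) (P' s) (lab' s) x y \<and> hv (mulc M mul c) c (P' s) (lab' s) x y = m')"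
  shows "def2 (\<lambda>s x y. allin A (P s) (lab s) x y \<and> hv mul e (P s) (lab s) x y = m)"
proof (cases "A \<subseteq> {e}")
  case True
  have fA: "finite A" using fin A finite_subset by blast
  have "def2 (\<lambda>s x y. allin A (P s) (lab s) x y \<and> m = e)"
    by (intro def2_and def2_allin[OF dP dL fA] def2_const)
  then show ?thesis
  proof (rule def2_cong)
    fix s x y
    show "(allin A (P s) (lab s) x y \<and> m = e) = (allin A (P s) (lab s) x y \<and> hv mul e (P s) (lab s) x y = m)"
      using hv_e[OF m allin_mono[OF _ True]] by metis
  qed
next
  case False
  then obtain c where cA: "c \<in> A" and ce: "c \<noteq> e" by blast
  have fA: "finite A" using fin A finite_subset by blast
  have cM: "c \<in> M" using cA A by blast
  define B where "B = A - {c}"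
  have BA: "B \<subset> A" unfolding B_def using cA by blast
  have BM: "B \<subseteq> M" using BA A by blast
  define RB where "RB = (\<lambda>t s x y. allin B (P s) (lab s) x y \<and> hv mul e (P s) (lab s) x y = t)"
  have dRB: "def2 (RB t)" for t unfolding RB_def by (rule IHi[OF BA dP dL])
  define isC where "isC = (\<lambda>s p. P s p \<and> lab s p = c)"
  have dC: "def1 isC" unfolding isC_def using dP dL by (intro def1_and) auto
  have dCL: "def2 (\<lambda>s x y. isC s x)" by (rule def2_L[OF dC])
  have dCR: "def2 (\<lambda>s x y. isC s y)" by (rule def2_R[OF dC])
  define lab' where "lab' = (\<lambda>s. labc mul e c B (P s) (lab s))"
  define RBo where "RBo = (\<lambda>t s q p. \<exists>z\<ge>1. RB t s q z \<and> (z < p \<and> \<not> (\<exists>w\<ge>1. z < w \<and> w < p)))"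
  have dRBo: "def2 (RBo t)" for t unfolding RBo_def
    by (intro def2_comp dRB def2_and def2_less def2_not)
  have RBo_iff: "RBo t s q p \<longleftrightarrow> RB t s q (p - 1)" if "2 \<le> p" for t s q p
  proof
    assume "RBo t s q p"
    then obtain z where z: "z \<ge> 1" "RB t s q z" "z < p" "\<not> (\<exists>w\<ge>1. z < w \<and> w < p)" unfolding RBo_def by blast
    have "z = p - 1"
    proof (rule ccontr)
      assume "z \<noteq> p - 1"
      then have "Suc z < p" using z by auto
      then show False using z(4) by force
    qed
    then show "RB t s q (p - 1)" using z by simp
  next
    assume "RB t s q (p - 1)"
    then show "RBo t s q p" unfolding RBo_def using that by (intro exI[of _ "p - 1"]) auto
  qed
  define PV where "PV = (\<lambda>s q p. q < p \<and> isC s q \<and> \<not> (\<exists>w\<ge>1. (q < w \<and> isC s w) \<and> w < p))"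
  have dPV: "def2 PV" unfolding PV_def
    by (intro def2_and def2_less dCL def2_not def2_comp dCR)
  have PV_iff: "PV s q p \<longleftrightarrow> prevC c (P s) (lab s) q p" if "1 \<le> q" for s q p
    unfolding PV_def prevC_def isC_def using that by auto
  have dL': "\<forall>u. def1 (\<lambda>s p. lab' s p = u)"
  proof
    fix u
    define E where "E = (\<lambda>s q p. PV s q p \<and> ((\<exists>t\<in>M. RBo t s q p \<and> mul (mul c t) c = u) \<or> (\<not> (\<exists>t\<in>M. RBo t s q p) \<and> u = c)))"
    have dE: "def2 E" unfolding E_def
      by (intro def2_and dPV def2_or def2_fin fin dRBo def2_const def2_not)
    have d: "def1 (\<lambda>s p. (\<exists>q\<ge>1. E s q p) \<or> (\<not> (\<exists>q\<ge>1. PV s q p) \<and> u = c))"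
      by (intro def1_or def1_ex dE def1_and def1_not dPV def1_const)
    show "def1 (\<lambda>s p. lab' s p = u)"
    proof (rule def1_cong[OF d])
      fix s p
      show "((\<exists>q\<ge>1. E s q p) \<or> (\<not> (\<exists>q\<ge>1. PV s q p) \<and> u = c)) = (lab' s p = u)"
      proof (cases "\<exists>q. prevC c (P s) (lab s) q p")
        case True
        then obtain q where q: "prevC c (P s) (lab s) q p" by blast
        have q1: "1 \<le> q" "q < p" using q unfolding prevC_def by auto
        have p2: "2 \<le> p" using q1 by simp
        have uniq: "prevC c (P s) (lab s) q' p \<Longrightarrow> q' = q" for q' by (rule prevC_unique[OF _ q])
        have theq: "(THE q. prevC c (P s) (lab s) q p) = q" by (rule the_equality[where P="\<lambda>q. prevC c (P s) (lab s) q p", OF q uniq])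
        have lhs: "((\<exists>q\<ge>1. E s q p) \<or> (\<not> (\<exists>q\<ge>1. PV s q p) \<and> u = c)) \<longleftrightarrow>
            ((\<exists>t\<in>M. RB t s q (p - 1) \<and> mul (mul c t) c = u) \<or> (\<not> (\<exists>t\<in>M. RB t s q (p - 1)) \<and> u = c))"
        proof -
          have "(\<exists>q'\<ge>1. E s q' p) \<longleftrightarrow> E s q p"
          proof
            assume "\<exists>q'\<ge>1. E s q' p"
            then obtain q' where q': "1 \<le> q'" "E s q' p" by blast
            then have "PV s q' p" unfolding E_def by simp
            then have "q' = q" using uniq PV_iff[OF q'(1)] by simp
            then show "E s q p" using q' by simp
          qed (use q1 in blast)
          moreover have "\<exists>q\<ge>1. PV s q p" using PV_iff q q1 by blast
          ultimately show ?thesis unfolding E_def using PV_iff[OF q1(1)] q RBo_iff[OF p2] by simp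
        qed
        show ?thesis
        proof (cases "allin B (P s) (lab s) q (p - 1)")
          case True
          have lab: "lab' s p = mul (mul c (hv mul e (P s) (lab s) q (p - 1))) c"
            unfolding lab'_def by (rule labc_eq[OF q True])
          have hM: "hv mul e (P s) (lab s) q (p - 1) \<in> M" using hv_in[OF m allin_mono[OF True BM]] .
          show ?thesis unfolding lhs lab RB_def using True hM by auto
        next
          case False
          have "lab' s p = c" unfolding lab'_def labc_def theq using False True by simp
          then show ?thesis unfolding lhs RB_def using False by auto
        qed
      next
        case False
        have "lab' s p = c" unfolding lab'_def labc_def using False by simp
        moreover have "\<not> (\<exists>q\<ge>1. E s q p)" "\<not> (\<exists>q\<ge>1. PV s q p)" using False PV_iff unfolding E_def by blast+
        ultimately show ?thesis by auto
      qed
    qed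
  qed
  define RC where "RC = (\<lambda>\<pi> s x y. allin (Mc M mul c) (isC s) (lab' s) x y \<and> hv (mulc M mul c) c (isC s) (lab' s) x y = \<pi>)"
  have dRC: "def2 (RC \<pi>)" for \<pi> unfolding RC_def isC_def
    by (rule IHo[OF cA ce _ dL']) (use dC in \<open>simp add: isC_def\<close>)
  have allc: "allin (Mc M mul c) (isC s) (lab' s) x y" for s x y
    unfolding allin_def lab'_def using labc_in[OF m cM BM] by auto
  have mc: "mon (Mc M mul c) (mulc M mul c) c" by (rule mon_Mc[OF m cM])
  define Fst where "Fst = (\<lambda>s x x'. x < x' \<and> isC s x' \<and> \<not> (\<exists>w\<ge>1. x < w \<and> (w < x' \<and> isC s w)))"
  define Lst where "Lst = (\<lambda>s y' y. y' \<le> y \<and> isC s y' \<and> \<not> (\<exists>w\<ge>1. (y' < w \<and> isC s w) \<and> w \<le> y))"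
  have dFst: "def2 Fst" unfolding Fst_def
    by (intro def2_and def2_less dCR dCL def2_not def2_comp)
  have dLst: "def2 Lst" unfolding Lst_def
    by (intro def2_and def2_le dCL def2_not def2_comp def2_less dCR)
  define I where "I = {(m1, \<pi>, m2). m1 \<in> M \<and> \<pi> \<in> Mc M mul c \<and> m2 \<in> M \<and> mul (mul m1 \<pi>) m2 = m}"
  have fI: "finite I"
  proof -
    have "I \<subseteq> M \<times> M \<times> M" unfolding I_def using Mc_sub[OF m cM] by auto
    then show ?thesis using fin finite_subset by blast
  qed
  define D where "D = (\<lambda>(m1, \<pi>, m2) s x y. \<exists>x'\<ge>1. (Fst s x x' \<and> RBo m1 s x x') \<and>
      (\<exists>y'\<ge>1. (RC \<pi> s x' y' \<and> x' \<le> y') \<and> (Lst s y' y \<and> RB m2 s y' y)))"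
  have dD: "def2 (D i)" for i
  proof -
    obtain m1 \<pi> m2 where i: "i = (m1, \<pi>, m2)" by (cases i) auto
    show ?thesis unfolding i D_def prod.case
      by (intro def2_comp def2_and dFst dRBo dRC def2_le dLst dRB)
  qed
  define G where "G = (\<lambda>s x y. allin A (P s) (lab s) x y \<and>
      ((\<not> (\<exists>w\<ge>1. x < w \<and> (w \<le> y \<and> isC s w)) \<and> RB m s x y) \<or> (\<exists>i\<in>I. D i s x y)))"
  have dG: "def2 G" unfolding G_def
    by (intro def2_and def2_allin dP dL fA def2_or def2_not def2_comp def2_less def2_le dCR dCL dRB def2_fin fI dD)
  show ?thesis
  proof (rule def2_cong[OF dG])
    fix s :: "nat \<Rightarrow> 'a" and x y :: nat
    assume x1: "1 \<le> x"
    let ?hv = "hv mul e (P s) (lab s)"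
    have AM: "allin M (P s) (lab s) x y \<Longrightarrow> allin M (P s) (lab s) x y" by simp
    show "G s x y = (allin A (P s) (lab s) x y \<and> hv mul e (P s) (lab s) x y = m)"
    proof (cases "allin A (P s) (lab s) x y")
      case False then show ?thesis unfolding G_def by simp
    next
      case al: True
      have isCi: "isC s w \<longleftrightarrow> P s w \<and> lab s w = c" for w unfolding isC_def by simp
      have allB: "allin B (P s) (lab s) a b" if "x \<le> a" "b \<le> y" "\<And>w. a < w \<Longrightarrow> w \<le> b \<Longrightarrow> \<not> isC s w" for a b
        unfolding allin_def B_def using al that unfolding allin_def isC_def by auto
      show ?thesis
      proof (cases "\<exists>w. x < w \<and> w \<le> y \<and> isC s w")
        case False
        have nD: "\<not> (\<exists>i\<in>I. D i s x y)"
        proof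
          assume "\<exists>i\<in>I. D i s x y"
          then obtain m1 \<pi> m2 where "D (m1, \<pi>, m2) s x y" by auto
          then obtain x' y' where "Fst s x x'" "x' \<le> y'" "Lst s y' y" unfolding D_def by auto
          then show False using False unfolding Fst_def Lst_def by auto
        qed
        have "RB m s x y \<longleftrightarrow> ?hv x y = m" unfolding RB_def using allB[of x y] False by auto
        then show ?thesis unfolding G_def using nD False al by auto
      next
        case True
        obtain w0 where w0: "x < w0" "w0 \<le> y" "isC s w0" using True by blast
        have n1: "\<exists>w\<ge>1. x < w \<and> (w \<le> y \<and> isC s w)" using w0 x1 by (intro exI[of _ w0]) auto
        have "(\<exists>i\<in>I. D i s x y) \<longleftrightarrow> ?hv x y = m"
        proof
          assume "\<exists>i\<in>I. D i s x y"
          then obtain m1 \<pi> m2 where iI: "(m1, \<pi>, m2) \<in> I" and Di: "D (m1, \<pi>, m2) s x y" by auto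
          then obtain x' y' where F: "Fst s x x'" and Rbo: "RBo m1 s x x'" and Rc: "RC \<pi> s x' y'"
            and xy': "x' \<le> y'" and L: "Lst s y' y" and Rb: "RB m2 s y' y" unfolding D_def by auto
          have xx': "x < x'" "P s x'" "lab s x' = c" using F unfolding Fst_def isC_def by auto
          have yy': "y' \<le> y" "P s y'" "lab s y' = c" using L unfolding Lst_def isC_def by auto
          have "RB m1 s x (x' - 1)" using Rbo RBo_iff[of x' m1 s x] xx' x1 by simp
          then have m1: "m1 = ?hv x (x' - 1)" unfolding RB_def by simp
          have m2: "m2 = ?hv y' y" using Rb unfolding RB_def by simp
          have "\<pi> = hv (mulc M mul c) c (isC s) (lab' s) x' y'" using Rc unfolding RC_def by simp
          also have "\<dots> = mul c (?hv x' y')" unfolding isC_def lab'_def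
            using hvc_key[OF m cM A B_def, of x' "P s" "lab s" y'] xx' xy' yy' x1 allin_sub[OF al, of x' y'] by simp
          finally have pi: "\<pi> = mul c (?hv x' y')" .
          have "m = mul (mul m1 \<pi>) m2" using iI unfolding I_def by simp
          also have "\<dots> = ?hv x y" unfolding m1 m2 pi using decomp[OF m cM A xx'(1) xy' yy'(1) xx'(2,3) al] by simp
          finally show "?hv x y = m" by simp
        next
          assume hm: "?hv x y = m"
          define S where "S = {w. x < w \<and> w \<le> y \<and> isC s w}"
          have fS: "finite S" unfolding S_def by (rule finite_subset[of _ "{..y}"]) auto
          have neS: "S \<noteq> {}" using True unfolding S_def by auto
          define x' where "x' = Min S"
          define y' where "y' = Max S"
          have x'S: "x' \<in> S" unfolding x'_def using Min_in[OF fS neS] .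
          have y'S: "y' \<in> S" unfolding y'_def using Max_in[OF fS neS] .
          have xmin: "w \<in> S \<Longrightarrow> x' \<le> w" for w unfolding x'_def using fS by simp
          have ymax: "w \<in> S \<Longrightarrow> w \<le> y'" for w unfolding y'_def using fS by simp
          have xy': "x' \<le> y'" using xmin y'S by simp
          have xx': "x < x'" "x' \<le> y" "P s x'" "lab s x'= c" using x'S unfolding S_def isC_def by auto
          have yy': "x < y'" "y' \<le> y" "P s y'" "lab s y' = c" using y'S unfolding S_def isC_def by auto
          define m1 where "m1 = ?hv x (x' - 1)"
          define m2 where "m2 = ?hv y' y"
          define \<pi> where "\<pi> = hv (mulc M mul c) c (isC s) (lab' s) x' y'"
          have pi: "\<pi> = mul c (?hv x' y')" unfolding \<pi>_def isC_def lab'_def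
            using hvc_key[OF m cM A B_def, of x' "P s" "lab s" y'] xx' xy' yy' x1 allin_sub[OF al, of x' y'] by simp
          have AMa: "allin M (P s) (lab s) x y" using allin_mono[OF al A] .
          have m1M: "m1 \<in> M" unfolding m1_def using hv_in[OF m allin_sub[OF AMa, of x "x' - 1"]] xx' by simp
          have m2M: "m2 \<in> M" unfolding m2_def using hv_in[OF m allin_sub[OF AMa, of y' y]] yy' by simp
          have piM: "\<pi> \<in> Mc M mul c" unfolding \<pi>_def using hv_in[OF mc allc] .
          have "mul (mul m1 \<pi>) m2 = ?hv x y" unfolding m1_def m2_def pi
            using decomp[OF m cM A xx'(1) xy' yy'(2) xx'(3,4) al] by simp
          then have iI: "(m1, \<pi>, m2) \<in> I" unfolding I_def using m1M m2M piM hm by simp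
          have F: "Fst s x x'" unfolding Fst_def using xx' xmin unfolding S_def isC_def by force
          have B1: "RB m1 s x (x' - 1)" unfolding RB_def m1_def
            using allB[of x "x' - 1"] xmin xx' unfolding S_def by force
          have Rbo: "RBo m1 s x x'" using RBo_iff[of x' m1 s x] B1 xx' x1 by simp
          have Rc: "RC \<pi> s x' y'" unfolding RC_def \<pi>_def using allc by simp
          have nw: "\<not> (\<exists>w\<ge>1. (y' < w \<and> isC s w) \<and> w \<le> y)"
          proof
            assume "\<exists>w\<ge>1. (y' < w \<and> isC s w) \<and> w \<le> y"
            then obtain w where w: "y' < w" "isC s w" "w \<le> y" by blast
            then have "w \<in> S" unfolding S_def using yy' by auto
            then show False using ymax w by fastforce
          qed
          have L: "Lst s y' y" unfolding Lst_def using yy' nw unfolding isC_def by simp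
          have "allin B (P s) (lab s) y' y"
          proof (rule allB)
            fix w assume "y' < w" "w \<le> y"
            then show "\<not> isC s w" using ymax[of w] yy' unfolding S_def by auto
          qed (use yy' in auto)
          then have B2: "RB m2 s y' y" unfolding RB_def m2_def by simp
          have "D (m1, \<pi>, m2) s x y" unfolding D_def prod.case
            using F Rbo Rc xy' L B2 xx' yy' x1 by (intro exI[of _ x'] conjI exI[of _ y']) auto
          then show "\<exists>i\<in>I. D i s x y" using iI by blast
        qed
        then show ?thesis unfolding G_def using n1 al by auto
      qed
    qed
  qed
qed




lemma main_lemma:
  fixes P :: "(nat \<Rightarrow> 'a) \<Rightarrow> nat \<Rightarrow> bool" and lab :: "(nat \<Rightarrow> 'a) \<Rightarrow> nat \<Rightarrow> 'm" and M :: "'m set"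
  assumes "finite M" "mon M mul e" "aper M mul e" "A \<subseteq> M" "def1 P" "\<forall>u. def1 (\<lambda>s p. lab s p = u)"
  shows "def2 (\<lambda>s x y. allin A (P s) (lab s) x y \<and> hv mul e (P s) (lab s) x y = m)"
  using assms
proof (induction "card M" arbitrary: M mul e A P lab m rule: less_induct)
  case less
  note IHo = less.hyps
  have fin: "finite M" and mo: "mon M mul e" and ap: "aper M mul e" using less.prems by auto
  have inner: "\<forall>(A :: 'm set) (P :: (nat \<Rightarrow> 'a) \<Rightarrow> nat \<Rightarrow> bool) (lab :: (nat \<Rightarrow> 'a) \<Rightarrow> nat \<Rightarrow> 'm) m.
      card A = n \<longrightarrow> A \<subseteq> M \<longrightarrow> def1 P \<longrightarrow> (\<forall>u. def1 (\<lambda>s p. lab s p = u)) \<longrightarrow>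
      def2 (\<lambda>s x y. allin A (P s) (lab s) x y \<and> hv mul e (P s) (lab s) x y = m)" for n
  proof (induction n rule: less_induct)
    case (less n)
    note IHi = less.IH
    show ?case
    proof (intro allI impI)
      fix A :: "'m set" and P :: "(nat \<Rightarrow> 'a) \<Rightarrow> nat \<Rightarrow> bool" and lab :: "(nat \<Rightarrow> 'a) \<Rightarrow> nat \<Rightarrow> 'm" and m
      assume h: "card A = n" "A \<subseteq> M" "def1 P" "\<forall>u. def1 (\<lambda>s p. lab s p = u)"
      have fA: "finite A" using h(2) fin finite_subset by blast
      show "def2 (\<lambda>s x y. allin A (P s) (lab s) x y \<and> hv mul e (P s) (lab s) x y = m)"
      proof (rule step_lemma[OF fin mo ap h(2) h(3) h(4)])
        fix A' :: "'m set" and P' :: "(nat \<Rightarrow> 'a) \<Rightarrow> nat \<Rightarrow> bool" and lab' :: "(nat \<Rightarrow> 'a) \<Rightarrow> nat \<Rightarrow> 'm" and m'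
        assume a: "A' \<subset> A" "def1 P'" "\<forall>u. def1 (\<lambda>s p. lab' s p = u)"
        have "card A' < n" using psubset_card_mono[OF fA a(1)] h(1) by simp
        then show "def2 (\<lambda>s x y. allin A' (P' s) (lab' s) x y \<and> hv mul e (P' s) (lab' s) x y = m')"
          using IHi a h(2) by blast
      next
        fix c and P' :: "(nat \<Rightarrow> 'a) \<Rightarrow> nat \<Rightarrow> bool" and lab' :: "(nat \<Rightarrow> 'a) \<Rightarrow> nat \<Rightarrow> 'm" and m'
        assume a: "c \<in> A" "c \<noteq> e" "def1 P'" "\<forall>u. def1 (\<lambda>s p. lab' s p = u)"
        have cM: "c \<in> M" using a(1) h(2) by blast
        have sub: "Mc M mul c \<subseteq> M" by (rule Mc_sub[OF mo cM])
        have "e \<notin> Mc M mul c" by (rule e_notin_Mc[OF mo cM ap a(2)])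
        then have "Mc M mul c \<subset> M" using sub mon_e[OF mo] by blast
        then have card: "card (Mc M mul c) < card M" using psubset_card_mono[OF fin] by blast
        have finc: "finite (Mc M mul c)" using sub fin finite_subset by blast
        show "def2 (\<lambda>s x y. allin (Mc M mul c) (P' s) (lab' s) x y \<and> hv (mulc M mul c) c (P' s) (lab' s) x y = m')"
          by (rule IHo[OF card finc mon_Mc[OF mo cM] aper_Mc[OF mo cM ap] order_refl a(3) a(4)])
      qed
    qed
  qed
  then show ?case using less.prems by blast
qed




lemma subst_append: "subst \<sigma> (xs @ ys) = subst \<sigma> xs @ subst \<sigma> ys"
  unfolding subst_def by simp

lemma subst_Nil: "subst \<sigma> [] = []" unfolding subst_def by simp

lemma subst_Cons: "subst \<sigma> (c # w) = (case c of Inl g \<Rightarrow> [Inl g] | Inr X \<Rightarrow> \<sigma> X) @ subst \<sigma> w"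
  unfolding subst_def by simp

lemma subst_single: "subst \<sigma> [Inr Y] = \<sigma> Y" unfolding subst_def by simp

lemma subst_id: "subst (\<lambda>X. [Inr X]) w = w"
  by (induction w) (auto simp: subst_Nil subst_Cons split: sum.split)

lemma subst_assoc: "subst \<sigma> (subst \<tau> w) = subst (\<lambda>Y. subst \<sigma> (\<tau> Y)) w"
  by (induction w) (auto simp: subst_Nil subst_Cons subst_append split: sum.split)

lemma count_subst:
  fixes \<sigma> :: "'x::finite \<Rightarrow> ('g + 'x) list"
  shows "count_list (subst \<sigma> w) (Inr X) = (\<Sum>Z\<in>UNIV. count_list w (Inr Z) * count_list (\<sigma> Z) (Inr X))"
proof (induction w)
  case Nil then show ?case by (simp add: subst_Nil)
next
  case (Cons c w)
  show ?case
  proof (cases c)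
    case (Inl g) then show ?thesis using Cons by (simp add: subst_Cons)
  next
    case (Inr Y)
    have "(\<Sum>Z\<in>UNIV. count_list (Inr Y # w) (Inr Z) * count_list (\<sigma> Z) (Inr X))
        = (\<Sum>Z\<in>UNIV. (if Y = Z then count_list (\<sigma> Z) (Inr X) else 0) + count_list w (Inr Z) * count_list (\<sigma> Z) (Inr X))"
      by (rule sum.cong) (auto simp: algebra_simps)
    also have "\<dots> = count_list (\<sigma> Y) (Inr X) + (\<Sum>Z\<in>UNIV. count_list w (Inr Z) * count_list (\<sigma> Z) (Inr X))"
      by (simp add: sum.distrib)
    finally show ?thesis using Cons Inr by (simp add: subst_Cons)
  qed
qed

lemma step_eq: "step T (q, \<sigma>) a = (delta T q a, \<lambda>Y. subst \<sigma> (upd T q a Y))"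
  unfolding step_def by simp

lemma foldl_step: "foldl (step T) (q, \<sigma>) v = (state_after T q v, \<lambda>Y. subst \<sigma> (snd (run_from T q v) Y))"
proof (induction v arbitrary: q \<sigma>)
  case Nil then show ?case by (simp add: run_from_def state_after_def subst_single)
next
  case (Cons a v)
  have r: "run_from T q (a # v) = foldl (step T) (delta T q a, \<lambda>Y. subst (\<lambda>X. [Inr X]) (upd T q a Y)) v"
    unfolding run_from_def by (simp add: step_eq)
  show ?case
    unfolding r foldl_Cons step_eq Cons by (simp add: state_after_def subst_id subst_assoc)
qed

lemma fst_run_from: "fst (run_from T p u) = state_after T p u"
  unfolding run_from_def using foldl_step[of T p "\<lambda>X. [Inr X]" u] by simp

lemma run_from_append: "run_from T p (u @ v) = (state_after T (state_after T p u) v,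
   \<lambda>Y. subst (snd (run_from T p u)) (snd (run_from T (state_after T p u) v) Y))"
proof -
  have "run_from T p (u @ v) = foldl (step T) (run_from T p u) v" unfolding run_from_def by simp
  also have "run_from T p u = (state_after T p u, snd (run_from T p u))" using fst_run_from
    by (metis prod.collapse)
  finally show ?thesis using foldl_step by simp
qed

definition beh :: "('a, 'g, 'q, 'x) sst \<Rightarrow> 'a list \<Rightarrow> 'q \<Rightarrow> 'q \<times> ('x \<Rightarrow> 'x \<Rightarrow> nat)" where
  "beh T u = (\<lambda>p. (state_after T p u, \<lambda>Y X. count_list (snd (run_from T p u) Y) (Inr X)))"

definition bcomp :: "('q \<Rightarrow> 'q \<times> ('x::finite \<Rightarrow> 'x \<Rightarrow> nat)) \<Rightarrow> ('q \<Rightarrow> 'q \<times> ('x \<Rightarrow> 'x \<Rightarrow> nat)) \<Rightarrow> 'q \<Rightarrow> 'q \<times> ('x \<Rightarrow> 'x \<Rightarrow> nat)" where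
  "bcomp f g = (\<lambda>p. (fst (g (fst (f p))), \<lambda>Y X. \<Sum>Z\<in>UNIV. snd (g (fst (f p))) Y Z * snd (f p) Z X))"

lemma beh_append:
  fixes T :: "('a, 'g, 'q, 'x::finite) sst"
  shows "beh T (u @ v) = bcomp (beh T u) (beh T v)"
  unfolding beh_def bcomp_def
  by (rule ext) (simp add: run_from_append count_subst state_after_def)

lemma wpow_Suc: "wpow u (Suc n) = u @ wpow u n" unfolding wpow_def by simp
lemma wpow_0: "wpow u 0 = []" unfolding wpow_def by simp

lemma tmat_beh:
  fixes T :: "('a, 'g, 'q, 'x) sst"
  assumes "tmat T w1 = tmat T w2" shows "beh T w1 = beh T w2"
proof (rule ext)
  fix p
  define q where "q = state_after T p w1"
  have t: "tmat T w1 (p, X) (q, Y) = tmat T w2 (p, X) (q, Y)" for X Y using assms by simp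
  have q2: "state_after T p w2 = q"
    using t[of undefined undefined] unfolding tmat_def Let_def q_def by (auto split: if_splits)
  have "count_list (snd (run_from T p w1) Y) (Inr X) = count_list (snd (run_from T p w2) Y) (Inr X)" for X Y
    using t[of X Y] q2 unfolding tmat_def Let_def q_def by (auto split: if_splits)
  then show "beh T w1 p = beh T w2 p" unfolding beh_def using q2 q_def by auto
qed

lemma count_le1:
  assumes "one_bounded T" shows "count_list (snd (run_from T p u) Y) (Inr X) \<le> 1"
proof -
  obtain k f where "tmat T u (p, X) (state_after T p u, Y) = Some (k, f)" and
    "k = count_list (snd (run_from T p u) Y) (Inr X)"
    unfolding tmat_def Let_def by auto
  then show ?thesis using assms unfolding one_bounded_def by blast
qed




lemma hv_beh:
  fixes T :: "('a, 'g, 'q, 'x::finite) sst"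
  shows "hv (bcomp) (beh T []) (\<lambda>p. True) (\<lambda>p. beh T [s (p - 1)]) x y = beh T (factor s x y)"
proof (induction y)
  case 0 then show ?case by (simp add: factor_def)
next
  case (Suc y)
  show ?case
  proof (cases "Suc y \<le> x")
    case True then show ?thesis by (simp add: factor_def)
  next
    case False
    then have "factor s x (Suc y) = factor s x y @ [s y]" unfolding factor_def by simp
    then show ?thesis using False Suc by (simp add: beh_append)
  qed
qed

theorem final:
  fixes T :: "('a::finite, 'g, 'q::finite, 'x::finite) sst"
  assumes ap: "aperiodic T" and ob: "one_bounded T"
  shows "\<forall>X Y. \<exists>\<phi> :: 'a fo. fv \<phi> \<subseteq> {0, 1} \<and>
           (\<forall>s i j \<nu>. in_dom T s \<longrightarrow> 1 \<le> i \<longrightarrow> i \<le> j \<longrightarrow>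
              \<nu> 0 = i \<longrightarrow> \<nu> 1 = j \<longrightarrow> (\<forall>v. \<nu> v \<ge> 1) \<longrightarrow>
              (sat s \<nu> \<phi> \<longleftrightarrow> flows T (runq T s i) X (factor s i j) 1 (runq T s j) Y))"
proof (intro allI)
  fix X Y :: 'x
  define M where "M = range (beh T)"
  define e where "e = beh T []"
  have mo: "mon M bcomp e" unfolding mon_def M_def e_def
  proof (intro conjI ballI)
    show "beh T [] \<in> range (beh T)" by simp
  next
    fix x y assume "x \<in> range (beh T)" "y \<in> range (beh T)"
    then show "bcomp x y \<in> range (beh T)" by (auto simp: beh_append[symmetric])
  next
    fix x y z assume "x \<in> range (beh T)" "y \<in> range (beh T)" "z \<in> range (beh T)"
    then show "bcomp (bcomp x y) z = bcomp x (bcomp y z)" by (auto simp: beh_append[symmetric])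
  next
    fix x assume "x \<in> range (beh T)"
    then show "bcomp (beh T []) x = x" "bcomp x (beh T []) = x" by (auto simp: beh_append[symmetric])
  qed
  have mp: "mpow bcomp e (beh T u) n = beh T (wpow u n)" for u n
    by (induction n) (simp_all add: e_def wpow_0 wpow_Suc beh_append)
  have apM: "aper M bcomp e" unfolding aper_def M_def
  proof
    fix x assume "x \<in> range (beh T)"
    then obtain u where u: "x = beh T u" by blast
    obtain N where "\<forall>u. tmat T (wpow u N) = tmat T (wpow u (Suc N))" using ap unfolding aperiodic_def by blast
    then have "beh T (wpow u N) = beh T (wpow u (Suc N))" using tmat_beh by blast
    then show "\<exists>n. mpow bcomp e x n = mpow bcomp e x (Suc n)" unfolding u mp by blast
  qed
  have finM: "finite M"
  proof -
    define enc where "enc = (\<lambda>f :: 'q \<Rightarrow> 'q \<times> ('x \<Rightarrow> 'x \<Rightarrow> nat). \<lambda>p. (fst (f p), \<lambda>Y X. snd (f p) Y X = 1))"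
    have "inj_on enc M"
    proof (rule inj_onI)
      fix f g assume f: "f \<in> M" and g: "g \<in> M" and eq: "enc f = enc g"
      obtain u v where uv: "f = beh T u" "g = beh T v" using f g unfolding M_def by blast
      show "f = g"
      proof (rule ext)
        fix p
        have e1: "fst (f p) = fst (g p)" using fun_cong[OF eq, of p] unfolding enc_def by simp
        have "snd (f p) Y X = snd (g p) Y X" for X Y
        proof -
          have ff: "(\<lambda>Y X. snd (f p) Y X = 1) = (\<lambda>Y X. snd (g p) Y X = 1)" using fun_cong[OF eq, of p] unfolding enc_def by simp
          have "(snd (f p) Y X = 1) = (snd (g p) Y X = 1)" using fun_cong[OF fun_cong[OF ff, of Y], of X] by simp
          moreover have "snd (f p) Y X \<le> 1" "snd (g p) Y X \<le> 1" unfolding uv beh_def using count_le1[OF ob] by auto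
          ultimately show ?thesis by linarith
        qed
        then have "snd (f p) = snd (g p)" by (intro ext)
        then show "f p = g p" using e1 by (rule prod_eqI[rotated])
      qed
    qed
    moreover have "finite (enc ` M)" by (rule finite_subset[OF subset_UNIV finite_UNIV])
    ultimately show ?thesis using finite_imageD by blast
  qed
  define A where "A = range (\<lambda>a. beh T [a])"
  have AM: "A \<subseteq> M" unfolding A_def M_def by auto
  define lab0 where "lab0 = (\<lambda>(s :: nat \<Rightarrow> 'a) p. beh T [s (p - 1)])"
  have dP: "def1 (\<lambda>(s :: nat \<Rightarrow> 'a) p. True)" by (rule def1_const)
  have dL: "\<forall>u. def1 (\<lambda>s p. lab0 s p = u)"
  proof
    fix u
    have "def1 (\<lambda>s p. \<exists>a\<in>{a. beh T [a] = u}. s (p - 1) = a)" by (intro def1_fin def1_letter) simp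
    then show "def1 (\<lambda>s p. lab0 s p = u)" by (rule def1_cong) (auto simp: lab0_def)
  qed
  have dR: "def2 (\<lambda>s x y. beh T (factor s x y) = f)" for f
  proof -
    have "def2 (\<lambda>s x y. allin A ((\<lambda>s p. True) s) (lab0 s) x y \<and> hv bcomp e ((\<lambda>s p. True) s) (lab0 s) x y = f)"
      by (rule main_lemma[OF finM mo apM AM dP dL])
    then show ?thesis
    proof (rule def2_cong)
      fix s x y
      have "allin A (\<lambda>p. True) (lab0 s) x y" unfolding allin_def A_def lab0_def by auto
      moreover have "hv bcomp e (\<lambda>p. True) (lab0 s) x y = beh T (factor s x y)"
        unfolding e_def lab0_def using hv_beh by simp
      ultimately show "(allin A ((\<lambda>s p. True) s) (lab0 s) x y \<and> hv bcomp e ((\<lambda>s p. True) s) (lab0 s) x y = f) =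
        (beh T (factor s x y) = f)" by simp
    qed
  qed
  have dFi: "def1 (\<lambda>(s :: nat \<Rightarrow> 'a) z. \<not> (\<exists>w\<ge>1. w < z))"
    by (intro def1_not def1_ex def2_less)
  have dQ: "def1 (\<lambda>s i. beh T (pref s i) = g)" for g
  proof -
    define Q' where "Q' = (\<lambda>(s :: nat \<Rightarrow> 'a) z i. \<not> (\<exists>w\<ge>1. w < z) \<and>
       (\<exists>a\<in>UNIV. s (z - 1) = a \<and> (\<exists>g2\<in>M. bcomp (beh T [a]) g2 = g \<and> beh T (factor s z i) = g2)))"
    have d1: "def2 (\<lambda>(s :: nat \<Rightarrow> 'a) z i. s (z - 1) = a)" for a by (rule def2_L[OF def1_letter])
    have d2: "def2 (\<lambda>(s :: nat \<Rightarrow> 'a) z i. \<not> (\<exists>w\<ge>1. w < z))" by (rule def2_L[OF dFi])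
    have "def2 Q'" unfolding Q'_def
      by (intro def2_and d2 def2_fin finite_UNIV d1 finM def2_const dR)
    then have "def1 (\<lambda>s i. \<exists>z\<ge>1. Q' s z i)" by (rule def1_ex)
    then show ?thesis
    proof (rule def1_cong)
      fix s i assume i1: "1 \<le> (i::nat)"
      have "(\<exists>z\<ge>1. Q' s z i) \<longleftrightarrow> Q' s 1 i"
      proof
        assume "\<exists>z\<ge>1. Q' s z i"
        then obtain z where z: "1 \<le> z" "Q' s z i" by blast
        have "z = 1"
        proof (rule ccontr)
          assume "z \<noteq> 1"
          then have "1 < z" using z(1) by simp
          then show False using z(2) unfolding Q'_def by blast
        qed
        then show "Q' s 1 i" using z by simp
      qed auto
      also have "\<dots> \<longleftrightarrow> bcomp (beh T [s 0]) (beh T (factor s 1 i)) = g"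
        unfolding Q'_def M_def by auto
      also have "bcomp (beh T [s 0]) (beh T (factor s 1 i)) = beh T (pref s i)"
      proof -
        have "pref s i = [s 0] @ factor s 1 i" unfolding pref_def factor_def using i1 by (simp add: upt_conv_Cons)
        then show ?thesis using beh_append[of T "[s 0]" "factor s 1 i"] by simp
      qed
      finally show "(\<exists>z\<ge>1. Q' s z i) = (beh T (pref s i) = g)" .
    qed
  qed
  define J where "J = {(g, f). g \<in> M \<and> f \<in> M \<and> snd (f (fst (g (init T)))) Y X = 1}"
  have fJ: "finite J" proof -
    have "J \<subseteq> M \<times> M" unfolding J_def by auto
    then show ?thesis using finM finite_subset by blast
  qed
  define DD where "DD = (\<lambda>(g, f) s i j. beh T (pref s i) = g \<and> beh T (factor s i j) = f)"
  have dDD: "def2 (DD gf)" for gf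
  proof -
    obtain g f where gf: "gf = (g, f)" by (cases gf) auto
    show ?thesis unfolding gf DD_def prod.case by (intro def2_and def2_L dQ dR)
  qed
  have "def2 (\<lambda>s i j. \<exists>gf\<in>J. DD gf s i j)" by (intro def2_fin fJ dDD)
  then have "defv {0, 1} (\<lambda>s \<nu>. \<exists>gf\<in>J. DD gf s (\<nu> 0) (\<nu> 1))" unfolding def2_def by blast
  then obtain \<phi> :: "'a fo" where fv: "fv \<phi> \<subseteq> {0, 1}" and sem: "\<And>s \<nu>. good \<nu> \<Longrightarrow> sat s \<nu> \<phi> \<longleftrightarrow> (\<exists>gf\<in>J. DD gf s (\<nu> 0) (\<nu> 1))"
    unfolding defv_def by blast
  show "\<exists>\<phi> :: 'a fo. fv \<phi> \<subseteq> {0, 1} \<and>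
           (\<forall>s i j \<nu>. in_dom T s \<longrightarrow> 1 \<le> i \<longrightarrow> i \<le> j \<longrightarrow>
              \<nu> 0 = i \<longrightarrow> \<nu> 1 = j \<longrightarrow> (\<forall>v. \<nu> v \<ge> 1) \<longrightarrow>
              (sat s \<nu> \<phi> \<longleftrightarrow> flows T (runq T s i) X (factor s i j) 1 (runq T s j) Y))"
  proof (intro exI[of _ \<phi>] conjI fv allI impI)
    fix s :: "nat \<Rightarrow> 'a" and i j :: nat and \<nu> :: "nat \<Rightarrow> nat"
    assume h: "in_dom T s" "1 \<le> i" "i \<le> j" "\<nu> 0 = i" "\<nu> 1 = j" "\<forall>v. \<nu> v \<ge> 1"
    have gd: "good \<nu>" using h(6) unfolding good_def by blast
    have "sat s \<nu> \<phi> \<longleftrightarrow> (\<exists>gf\<in>J. DD gf s i j)" using sem[OF gd] h(4,5) by simp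
    also have "\<dots> \<longleftrightarrow> snd (beh T (factor s i j) (fst (beh T (pref s i) (init T)))) Y X = 1"
      unfolding J_def DD_def M_def by auto
    also have "\<dots> \<longleftrightarrow> flows T (runq T s i) X (factor s i j) 1 (runq T s j) Y"
    proof -
      have pj: "pref s j = pref s i @ factor s i j"
        unfolding pref_def factor_def using upt_add_eq_append[of 0 i "j - i"] h(3) by simp
      have "runq T s j = state_after T (runq T s i) (factor s i j)"
        unfolding runq_def pj state_after_def by simp
      then show ?thesis unfolding flows_def beh_def runq_def fst_run_from by simp
    qed
    finally show "sat s \<nu> \<phi> \<longleftrightarrow> flows T (runq T s i) X (factor s i j) 1 (runq T s j) Y" .
  qed
qed



theorem mainTheorem6:
  fixes T :: "('a::finite, 'g, 'q::finite, 'x::finite) sst"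
  assumes "copyless T"
    and "aperiodic T"
    and "one_bounded T"
  shows "\<forall>X Y. \<exists>\<phi> :: 'a fo. fv \<phi> \<subseteq> {0, 1} \<and>
           (\<forall>s i j \<nu>. in_dom T s \<longrightarrow> 1 \<le> i \<longrightarrow> i \<le> j \<longrightarrow>
              \<nu> 0 = i \<longrightarrow> \<nu> 1 = j \<longrightarrow> (\<forall>v. \<nu> v \<ge> 1) \<longrightarrow>
              (sat s \<nu> \<phi> \<longleftrightarrow> flows T (runq T s i) X (factor s i j) 1 (runq T s j) Y))"
  by (rule final[OF assms(2) assms(3)])

end
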